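(* Let $C_\lambda$ be the power-divergence copula and let $\mathcal{Z}(C_\lambda)=\{(u_1,u_2)\in[0,1]^2: C_\lambda(u_1,u_2)=0\}$ be its zero set. (i) If $\lambda\le -1$, then $\mathcal{Z}(C_\lambda)=\{(u_1,0):u_1\in[0,1]\}\cup\{(0,u_2):u_2\in[0,1]\}$. (ii) If $\lambda>-1$, then $\mathcal{Z}(C_\lambda)$ has positive (Lebesgue) area. (iii) As $\lambda\to\infty$, the zero set tends to the triangle $T$ with vertices $(0,0),(0,1),(1,0)$, in the sense that every $(u_1,u_2)\in[0,1]^2$ with $u_1+u_2<1$ belongs to $\mathcal{Z}(C_\lambda)$ for all sufficiently large $\lambda$, and every $(u_1,u_2)\in[0,1]^2$ with $u_1+u_2>1$ does not belong to $\mathcal{Z}(C_\lambda)$ for all sufficiently large $\lambda$; the boundary curve $\phi_\lambda(u_1)+\phi_\lambda(u_2)=\phi_\lambda(0)$ converges to the line $u_1+u_2=1$.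
   Context: For $\lambda\in\mathbb{R}$ define $\phi_\lambda$ on $[0,\infty)$ by $\phi_\lambda(x)=\frac{1}{\lambda(\lambda+1)}(x^{\lambda+1}-x+\lambda(1-x))$ for $\lambda\neq-1,0$; $\phi_0(x)=1-x+x\log x$; $\phi_{-1}(x)=x-1-\log x$; values at $x=0$ are limits, so $\phi_\lambda(0)=1/(\lambda+1)$ for $\lambda>-1$ and $\phi_\lambda(0)=\infty$ for $\lambda\le-1$. On $[0,1]$, $\phi_\lambda$ is convex, strictly decreasing, $\phi_\lambda(1)=0$. The pseudoinverse is $\phi_\lambda^{[-1]}(t)=\phi_\lambda^{-1}(t)$ (inverse of $\phi_\lambda|_{[0,1]}$) for $0\le t<\phi_\lambda(0)$ and $0$ for $t\ge\phi_\lambda(0)$. The power-divergence (PD) copula is $C_\lambda(u_1,u_2)=\phi_\lambda^{[-1]}(\phi_\lambda(u_1)+\phi_\lambda(u_2))$, $u_1,u_2\in[0,1]$ (with $\phi_\lambda^{[-1]}(\infty)=0$). *)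

theory Defs
  imports "HOL-Analysis.Analysis"
begin

text \<open>The generator phi_lambda on [0,1], extended-real valued so that phi_lambda(0) = infinity
  for lambda <= -1. Values at x = 0 are the limits given in the paper.\<close>
definition pd_phi :: "real \<Rightarrow> real \<Rightarrow> ereal" where
  "pd_phi l x =
     (if x = 0 then (if l > -1 then ereal (1 / (l + 1)) else \<infinity>)
      else if l = 0 then ereal (1 - x + x * ln x)
      else if l = -1 then ereal (x - 1 - ln x)
      else ereal ((x powr (l + 1) - x + l * (1 - x)) / (l * (l + 1))))"

definition pd_pinv :: "real \<Rightarrow> ereal \<Rightarrow> real" where
  "pd_pinv l t =
     (if t < pd_phi l 0 then (THE x. x \<in> {0..1} \<and> pd_phi l x = t) else 0)"

definition pd_copula :: "real \<Rightarrow> real \<Rightarrow> real \<Rightarrow> real" where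
  "pd_copula l u1 u2 = pd_pinv l (pd_phi l u1 + pd_phi l u2)"

definition pd_zeroset :: "real \<Rightarrow> (real \<times> real) set" where
  "pd_zeroset l = {(u1, u2). u1 \<in> {0..1} \<and> u2 \<in> {0..1} \<and> pd_copula l u1 u2 = 0}"

definition pd_curve :: "real \<Rightarrow> (real \<times> real) set" where
  "pd_curve l = {(u1, u2). u1 \<in> {0..1} \<and> u2 \<in> {0..1} \<and>
                   pd_phi l u1 + pd_phi l u2 = pd_phi l 0}"

end

theory Submission
  imports Defs
begin


definition F :: "real \<Rightarrow> real \<Rightarrow> real" where
  "F l x = (if l = 0 then 1 - x + x * ln x
      else if l = -1 then x - 1 - ln x
      else (x powr (l + 1) - x + l * (1 - x)) / (l * (l + 1)))"

definition D :: "real \<Rightarrow> real \<Rightarrow> real" where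
  "D l x = (if l = 0 then ln x else if l = -1 then 1 - 1/x else (x powr l - 1) / l)"

lemma phi_F: "x \<noteq> 0 \<Longrightarrow> pd_phi l x = ereal (F l x)"
  by (simp add: pd_phi_def F_def)

lemma F_deriv: assumes "0 < x" shows "(F l has_real_derivative D l x) (at x)"
proof (cases "l = 0")
  case True
  have "((\<lambda>x. 1 - x + x * ln x) has_real_derivative ln x) (at x)"
    using assms by (auto intro!: derivative_eq_intros)
  then show ?thesis using True unfolding F_def D_def by simp
next
  case l0: False
  show ?thesis
  proof (cases "l = -1")
    case True
    have "((\<lambda>x. x - 1 - ln x) has_real_derivative 1 - 1/x) (at x)"
      using assms by (auto intro!: derivative_eq_intros)
    then show ?thesis using True unfolding F_def D_def by simp
  next
    case False
    have l1: "l + 1 \<noteq> 0" using False by linarith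
    have "((\<lambda>x. (x powr (l + 1) - x + l * (1 - x)) / (l * (l + 1))) has_real_derivative
        ((l+1) * x powr (l + 1 - 1) - 1 + l * (0 - 1)) / (l * (l + 1))) (at x)"
      using assms l0 l1 by (auto intro!: derivative_eq_intros)
    moreover have "((l+1) * x powr (l + 1 - 1) - 1 + l * (0 - 1)) / (l * (l + 1)) = (x powr l - 1) / l"
    proof -
      have "(l+1) * x powr (l + 1 - 1) - 1 + l * (0 - 1) = (l+1)*(x powr l - 1)"
        by (simp add: algebra_simps)
      then show ?thesis using l0 l1 by simp
    qed
    ultimately show ?thesis using l0 False unfolding F_def D_def by simp
  qed
qed

lemma D_neg: assumes "0 < x" "x < 1" shows "D l x < 0"
proof -
  have "l > 0 \<Longrightarrow> x powr l < 1" using assms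
    by (metis powr_less_mono2 powr_one_eq_one less_le_not_le order_less_le)
  moreover have "l < 0 \<Longrightarrow> x powr l > 1" using assms
    by (metis powr_less_mono2_neg powr_one_eq_one)
  moreover have "l > 0 \<Longrightarrow> (x powr l - 1) / l < 0" if "x powr l < 1"
    using that by (simp add: divide_neg_pos)
  moreover have "l < 0 \<Longrightarrow> (x powr l - 1) / l < 0" if "x powr l > 1"
    using that by (simp add: divide_pos_neg)
  ultimately show ?thesis using assms
    by (cases "l > 0"; cases "l < 0") (auto simp: D_def)
qed

lemma F_cont: "continuous_on {a..b} (F l)" if "0 < a"
  using that by (intro continuous_at_imp_continuous_on ballI DERIV_isCont[OF F_deriv]) auto

lemma F_decr: assumes "0 < x" "x < y" "y \<le> 1" shows "F l y < F l x"
  using assms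
  by (intro DERIV_neg_imp_decreasing_open[OF assms(2)] F_cont) (auto intro!: exI F_deriv D_neg)

lemma F_one: "F l 1 = 0" by (simp add: F_def)

lemma F_nonneg: assumes "0 < x" "x \<le> 1" shows "F l x \<ge> 0"
  using F_decr[OF assms(1) _ order_refl, of l] F_one assms by (cases "x = 1") auto
lemma F_gen: "l \<noteq> 0 \<Longrightarrow> l \<noteq> -1 \<Longrightarrow> F l x = (x powr (l + 1) - x + l * (1 - x)) / (l * (l + 1))"
  by (simp add: F_def)

lemma F_minus0: assumes "l \<noteq> 0" "l \<noteq> -1"
  shows "F l y - 1/(l+1) = (y powr (l+1) - (l+1)*y)/(l*(l+1))"
proof -
  have l1: "l + 1 \<noteq> 0" using assms by linarith
  have a: "1/(l+1) = l/(l*(l+1))" using assms l1 by simp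
  have "F l y - 1/(l+1) = ((y powr (l + 1) - y + l * (1 - y)) - l) / (l * (l + 1))"
    unfolding a F_gen[OF assms] by (simp add: diff_divide_distrib)
  also have "(y powr (l + 1) - y + l * (1 - y)) - l = y powr (l+1) - (l+1)*y"
    by (simp add: algebra_simps)
  finally show ?thesis .
qed

lemma powr_Suc': "0 < (y::real) \<Longrightarrow> y powr (l+1) = y * y powr l"
  using powr_add[of y l 1] by simp

lemma F_lt_phi0: assumes "l > -1" "0 < y" "y \<le> 1" shows "F l y < 1/(l+1)"
proof (cases "l = 0")
  case True
  have "ln y \<le> 0" using assms by simp
  then have "y * ln y \<le> 0" using assms by (simp add: mult_nonneg_nonpos)
  then show ?thesis using True assms ln_le_minus_one[of y] by (simp add: F_def)
next
  case False
  have l1: "l + 1 > 0" using assms by linarith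
  show ?thesis
  proof (cases "l > 0")
    case True
    have "y powr l \<le> 1" using assms True by (intro powr_le1) auto
    then have "y powr (l+1) \<le> y" using assms powr_Suc'[of y l] by (simp add: mult_left_le)
    moreover have "1*y < (l+1)*y" using assms True by (intro mult_strict_right_mono) auto
    ultimately have "y powr (l+1) - (l+1)*y < 0" by linarith
    then have "(y powr (l+1) - (l+1)*y)/(l*(l+1)) < 0" using True l1 by (simp add: divide_neg_pos)
    then show ?thesis using F_minus0[of l y] False assms by simp
  next
    case False2: False
    then have ln: "l < 0" using False by simp
    have "y powr l \<ge> 1" using assms ln powr_mono2'[of l y 1] by simp
    then have "y powr (l+1) \<ge> y" using assms powr_Suc'[of y l] by (simp add: mult_le_cancel_left1)
    moreover have "(l+1)*y < 1*y" using assms ln by (intro mult_strict_right_mono) auto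
    ultimately have "y powr (l+1) - (l+1)*y > 0" by linarith
    moreover have "l*(l+1) < 0" using ln l1 by (simp add: mult_neg_pos)
    ultimately have "(y powr (l+1) - (l+1)*y)/(l*(l+1)) < 0" by (simp add: divide_pos_neg)
    then show ?thesis using F_minus0[of l y] False assms by simp
  qed
qed

lemma phi0: "pd_phi l 0 = (if l > -1 then ereal (1/(l+1)) else \<infinity>)"
  by (simp add: pd_phi_def)

lemma phi_decr: assumes "0 \<le> x" "x < y" "y \<le> 1" shows "pd_phi l y < pd_phi l x"
proof (cases "x = 0")
  case True
  then show ?thesis using assms F_lt_phi0[of l y] by (auto simp: phi0 phi_F)
next
  case False
  then show ?thesis using assms F_decr[of x y l] by (simp add: phi_F)
qed

lemma phi_nonneg: assumes "0 \<le> x" "x \<le> 1" shows "0 \<le> pd_phi l x"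
proof (cases "x = 0")
  case True
  then show ?thesis by (auto simp: phi0)
next
  case False
  then show ?thesis using assms F_nonneg[of x l] by (simp add: phi_F)
qed

lemma phi_mono: assumes "0 \<le> x" "x \<le> y" "y \<le> 1" shows "pd_phi l y \<le> pd_phi l x"
  using phi_decr[of x y l] assms by (cases "x = y") auto

lemma near0: assumes "ereal t < pd_phi l 0" shows "\<exists>a. 0 < a \<and> a \<le> 1 \<and> t \<le> F l a"
proof -
  consider "l < -1" | "l = -1" | "l = 0" | "l > 0" | "-1 < l \<and> l < 0" by linarith
  then show ?thesis
  proof cases
    case 1
    define M where "M = max 1 (l*(l+1)*t + 1 - l)"
    define a where "a = M powr (1/(l+1))"
    have M1: "M \<ge> 1" unfolding M_def by simp
    have lp: "l*(l+1) > 0" using 1 by (simp add: mult_neg_neg)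
    have a0: "a > 0" unfolding a_def using M1 by simp
    have a1: "a \<le> 1" unfolding a_def using M1 1 powr_mono2'[of "1/(l+1)" 1 M] by (simp add: divide_neg_pos)
    have ap: "a powr (l+1) = M" unfolding a_def using M1 1 by (simp add: powr_powr)
    have "l*(l+1)*t \<le> M - 1 + l" unfolding M_def by linarith
    also have "\<dots> \<le> M - a + l*(1-a)"
    proof -
      have "l * a \<le> 0" using 1 a0 by (simp add: mult_neg_pos less_imp_le)
      then show ?thesis using a1 by (simp add: algebra_simps)
    qed
    finally have "t \<le> (M - a + l*(1-a)) / (l*(l+1))" using lp by (simp add: pos_le_divide_eq mult.commute)
    then have "t \<le> F l a" using 1 ap by (simp add: F_gen)
    then show ?thesis using a0 a1 by blast
  next
    case 2
    define a where "a = exp (-(\<bar>t\<bar>+1))"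
    have "a \<le> 1" unfolding a_def by simp
    moreover have "t \<le> F l a"
    proof -
      have "F l a = a - 1 - ln a" using 2 by (simp add: F_def)
      also have "\<dots> = a + \<bar>t\<bar>" unfolding a_def by simp
      finally show ?thesis using exp_gt_zero[of "- (\<bar>t\<bar> + 1)"] unfolding a_def by linarith
    qed
    ultimately show ?thesis unfolding a_def by (intro exI[of _ a]) (simp add: a_def)
  next
    case 3
    then have t1: "t < 1" using assms by (simp add: phi0)
    define s where "s = min 1 ((1-t)/2)"
    have s0: "s > 0" and s1: "s \<le> 1" using t1 unfolding s_def by auto
    have "s \<le> (1-t)/2" unfolding s_def by (rule min.cobounded2)
    then have st: "t \<le> 1 - 2 * s" by (simp add: field_simps)
    define a where "a = s * s"
    have a0: "a > 0" and a1: "a \<le> 1" unfolding a_def using s0 s1 by (auto simp: mult_le_one)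
    have "ln (1/s) \<le> 1/s - 1" using s0 by (intro ln_le_minus_one) simp
    then have lns: "ln s \<ge> 1 - 1/s" using s0 by (simp add: ln_div)
    have "ln a = 2 * ln s" unfolding a_def using s0 by (simp add: ln_mult)
    then have "a * ln a = 2 * (s * s) * ln s" unfolding a_def by simp
    also have "\<dots> \<ge> 2 * (s * s) * (1 - 1/s)" using lns s0 by (intro mult_left_mono) auto
    finally have "a * ln a \<ge> 2 * s * s - 2 * s" using s0 by (simp add: algebra_simps)
    then have "F l a \<ge> 1 + s * s - 2 * s" using 3 unfolding F_def a_def by simp
    then have "F l a \<ge> t" using st s0 by (smt (verit) mult_pos_pos)
    then show ?thesis using a0 a1 by blast
  next
    case 4
    then have t1: "t < 1/(l+1)" using assms by (simp add: phi0)
    define a where "a = min 1 (l*(1/(l+1) - t))"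
    have a0: "a > 0" and a1: "a \<le> 1" using t1 4 unfolding a_def by auto
    have al: "a / l \<le> 1/(l+1) - t" unfolding a_def using 4 t1
      by (simp add: divide_le_eq mult.commute)
    have lp: "l*(l+1) > 0" using 4 by simp
    have "(a powr (l+1) - (l+1)*a)/(l*(l+1)) \<ge> (0 - (l+1)*a)/(l*(l+1))"
      using lp by (intro divide_right_mono) auto
    also have "(0 - (l+1)*a)/(l*(l+1)) = - (a/l)"
    proof -
      have ll: "l * l > 0" using 4 by simp
      have "l + 1 \<noteq> 0" "l \<noteq> 0" "l + l * l \<noteq> 0" using 4 ll by linarith+
      then show ?thesis by (simp add: field_simps)
    qed
    finally have "F l a - 1/(l+1) \<ge> - (a/l)" using F_minus0[of l a] 4 by simp
    then have "F l a \<ge> t" using al by linarith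
    then show ?thesis using a0 a1 by blast
  next
    case 5
    then have t1: "t < 1/(l+1)" using assms by (simp add: phi0)
    have l1: "l + 1 > 0" using 5 by linarith
    have lp: "(-l)*(l+1) > 0" using 5 l1 by (intro mult_pos_pos) auto
    define M where "M = min 1 ((-l)*(l+1)*(1/(l+1) - t))"
    have X: "(-l)*(l+1)*(1/(l+1) - t) > 0" using lp t1 5 l1 by (intro mult_pos_pos) auto
    have M0: "M > 0" and M1: "M \<le> 1" unfolding M_def using X by (auto simp del: mult_minus_left)
    have Ml: "M / ((-l)*(l+1)) \<le> 1/(l+1) - t"
    proof -
      have "M \<le> (-l)*(l+1)*(1/(l+1) - t)" unfolding M_def by (rule min.cobounded2)
      then show ?thesis using pos_divide_le_eq[OF lp] by (simp only: mult.commute)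
    qed
    define a where "a = M powr (1/(l+1))"
    have a0: "a > 0" unfolding a_def using M0 by simp
    have a1: "a \<le> 1" unfolding a_def using M0 M1 l1 by (intro powr_le1) auto
    have ap: "a powr (l+1) = M" unfolding a_def using M0 l1 by (simp add: powr_powr)
    have "(a powr (l+1) - (l+1)*a)/(l*(l+1)) = ((l+1)*a - M)/((-l)*(l+1))"
    proof -
      have e1: "(l+1)*a - M = -(M - (l+1)*a)" by simp
      have e2: "(-l)*(l+1) = -(l*(l+1))" by simp
      show ?thesis by (simp only: ap e1 e2 minus_divide_divide)
    qed
    also have "\<dots> \<ge> (0 - M)/((-l)*(l+1))"
      using lp a0 l1 by (intro divide_right_mono) auto
    finally have "F l a - 1/(l+1) \<ge> - (M / ((-l)*(l+1)))" using F_minus0[of l a] 5 by simp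
    then have "F l a \<ge> t" using Ml by linarith
    then show ?thesis using a0 a1 by blast
  qed
qed

lemma phi_inj: assumes "x \<in> {0..1}" "y \<in> {0..1}" "pd_phi l x = pd_phi l y" shows "x = y"
proof (rule ccontr)
  assume "x \<noteq> y"
  then consider "x < y" | "y < x" by linarith
  then show False using phi_decr[of x y l] phi_decr[of y x l] assms by cases auto
qed

lemma char: assumes "u1 \<in> {0..1}" "u2 \<in> {0..1}"
  shows "pd_copula l u1 u2 = 0 \<longleftrightarrow> pd_phi l 0 \<le> pd_phi l u1 + pd_phi l u2"
proof
  assume "pd_phi l 0 \<le> pd_phi l u1 + pd_phi l u2"
  then show "pd_copula l u1 u2 = 0" unfolding pd_copula_def pd_pinv_def by auto
next
  assume c: "pd_copula l u1 u2 = 0"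
  show "pd_phi l 0 \<le> pd_phi l u1 + pd_phi l u2"
  proof (rule ccontr)
    assume "\<not> ?thesis"
    then have lt: "pd_phi l u1 + pd_phi l u2 < pd_phi l 0" by simp
    have n1: "0 \<le> pd_phi l u1" "0 \<le> pd_phi l u2" using assms phi_nonneg by auto
    have "u1 \<noteq> 0"
    proof
      assume "u1 = 0"
      then have "pd_phi l 0 \<le> pd_phi l u1 + pd_phi l u2" using n1 by (simp add: add_increasing2)
      then show False using lt by simp
    qed
    moreover have "u2 \<noteq> 0"
    proof
      assume "u2 = 0"
      then have "pd_phi l 0 \<le> pd_phi l u1 + pd_phi l u2" using n1 by (simp add: add_increasing)
      then show False using lt by simp
    qed
    ultimately have sum: "pd_phi l u1 + pd_phi l u2 = ereal (F l u1 + F l u2)" by (simp add: phi_F)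
    define r where "r = F l u1 + F l u2"
    have r0: "0 \<le> r" using n1 sum unfolding r_def \<open>u1 \<noteq> 0\<close> using F_nonneg assms \<open>u1 \<noteq> 0\<close> \<open>u2 \<noteq> 0\<close> by auto
    obtain a where a: "0 < a" "a \<le> 1" "r \<le> F l a" using near0[of r l] lt sum r_def by auto
    obtain x where x: "a \<le> x" "x \<le> 1" "F l x = r"
      using IVT2'[of "F l" 1 r a, OF _ _ _ F_cont[of a 1 l]] a r0 F_one[of l] by auto
    have px: "pd_phi l x = pd_phi l u1 + pd_phi l u2" using x a sum r_def by (simp add: phi_F)
    have "(THE y. y \<in> {0..1} \<and> pd_phi l y = pd_phi l u1 + pd_phi l u2) = x"
      using px x a phi_inj[of _ x l] by (intro the_equality) auto
    then have "pd_copula l u1 u2 = x" unfolding pd_copula_def pd_pinv_def using lt by simp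
    then show False using c x a by simp
  qed
qed

lemma part1: assumes "l \<le> -1"
  shows "pd_zeroset l = {(u1, 0) | u1. u1 \<in> {0..1}} \<union> {(0, u2) | u2. u2 \<in> {0..1}}"
proof (intro set_eqI)
  fix p :: "real \<times> real"
  obtain u1 u2 where p: "p = (u1, u2)" by (cases p)
  have fin: "x \<noteq> 0 \<Longrightarrow> pd_phi l x \<noteq> \<infinity>" for x by (simp add: phi_F)
  have p0: "pd_phi l 0 = \<infinity>" using assms by (simp add: phi0)
  show "p \<in> pd_zeroset l \<longleftrightarrow> p \<in> {(u1, 0) | u1. u1 \<in> {0..1}} \<union> {(0, u2) | u2. u2 \<in> {0..1}}"
  proof (cases "u1 \<in> {0..1} \<and> u2 \<in> {0..1}")
    case True
    then have "p \<in> pd_zeroset l \<longleftrightarrow> \<infinity> \<le> pd_phi l u1 + pd_phi l u2"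
      using char[of u1 u2 l] p p0 unfolding pd_zeroset_def by auto
    also have "\<dots> \<longleftrightarrow> u1 = 0 \<or> u2 = 0"
    proof (cases "u1 = 0 \<or> u2 = 0")
      case True
      have n1: "0 \<le> pd_phi l u1" "0 \<le> pd_phi l u2" using \<open>u1 \<in> {0..1} \<and> u2 \<in> {0..1}\<close> phi_nonneg by auto
      then show ?thesis using True p0 by auto
    next
      case False
      then have "u1 \<noteq> 0" "u2 \<noteq> 0" by auto
      then show ?thesis using False by (simp add: phi_F)
    qed
    finally show ?thesis using True p by auto
  next
    case False
    then show ?thesis using p unfolding pd_zeroset_def by auto
  qed
qed

lemma mf: "(fst :: real\<times>real \<Rightarrow> real) \<in> borel_measurable borel"
  by (intro borel_measurable_continuous_onI continuous_intros)
lemma ms: "(snd :: real\<times>real \<Rightarrow> real) \<in> borel_measurable borel"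
  by (intro borel_measurable_continuous_onI continuous_intros)
lemma m1[measurable]: "pd_phi l \<in> borel_measurable borel"
  unfolding pd_phi_def by measurable
lemma m2: "{p::real\<times>real. fst p \<in> {0..1} \<and> snd p \<in> {0..1} \<and> pd_phi l 0 \<le> pd_phi l (fst p) + pd_phi l (snd p)} \<in> sets lborel"
proof -
  note [measurable] = mf ms
  have "Measurable.pred borel (\<lambda>p::real\<times>real. fst p \<in> {0..1} \<and> snd p \<in> {0..1} \<and> pd_phi l 0 \<le> pd_phi l (fst p) + pd_phi l (snd p))"
    by measurable
  then show ?thesis by (simp add: pred_def)
qed
lemma m3: "a > 0 \<Longrightarrow> emeasure lborel ({0..a} \<times> {0..a::real}) > 0"
proof -
  assume a: "a>0"
  have "{0..a} \<times> {0..a::real} = cbox (0,0) (a,a)" by (simp add: cbox_Pair_eq)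
  moreover have "emeasure lborel (cbox (0::real,0::real) (a,a)) = ennreal (a*a)"
    using a by (subst emeasure_lborel_cbox) (auto simp: Basis_prod_def inner_prod_def ennreal_mult)
  ultimately show ?thesis using a by simp
qed

lemma zeroset_eq: "pd_zeroset l = {p::real\<times>real. fst p \<in> {0..1} \<and> snd p \<in> {0..1} \<and> pd_phi l 0 \<le> pd_phi l (fst p) + pd_phi l (snd p)}"
  unfolding pd_zeroset_def using char by auto

lemma part2: assumes "l > -1" shows "emeasure lborel (pd_zeroset l) > 0"
proof -
  define q where "q = 1/(l+1)"
  have q0: "q > 0" using assms unfolding q_def by simp
  have p0: "pd_phi l 0 = ereal q" using assms by (simp add: phi0 q_def)
  obtain a where a: "0 < a" "a \<le> 1" "q/2 \<le> F l a" using near0[of "q/2" l] p0 q0 by auto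
  have big: "ereal (q/2) \<le> pd_phi l x" if "x \<in> {0..a}" for x
  proof -
    have "ereal (q/2) \<le> pd_phi l a" using a by (simp add: phi_F)
    also have "\<dots> \<le> pd_phi l x" using that a by (intro phi_mono) auto
    finally show ?thesis .
  qed
  have sub: "{0..a} \<times> {0..a} \<subseteq> pd_zeroset l"
  proof
    fix p :: "real \<times> real" assume "p \<in> {0..a} \<times> {0..a}"
    then have h: "fst p \<in> {0..a}" "snd p \<in> {0..a}" by auto
    have "pd_phi l 0 = ereal (q/2) + ereal (q/2)" using p0 by simp
    also have "\<dots> \<le> pd_phi l (fst p) + pd_phi l (snd p)" using big h by (intro add_mono) auto
    finally show "p \<in> pd_zeroset l" unfolding zeroset_eq using h a by auto
  qed
  have "emeasure lborel ({0..a} \<times> {0..a}) \<le> emeasure lborel (pd_zeroset l)"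
    using sub m2[of l] by (intro emeasure_mono) (auto simp: zeroset_eq)
  then show ?thesis using m3[OF a(1)] by simp
qed

definition N :: "real \<Rightarrow> real \<Rightarrow> real \<Rightarrow> real" where
  "N l u v = u powr (l+1) + v powr (l+1) - u - v + l*(1-u-v)"

definition G :: "real \<Rightarrow> real \<Rightarrow> real" where
  "G l x = (x powr (l + 1) - x + l * (1 - x)) / (l * (l + 1))"

lemma phi_G: assumes "l > 0" shows "pd_phi l x = ereal (G l x)"
proof (cases "x = 0")
  case True
  have "l + 1 > 0" using assms by simp
  then show ?thesis using True assms by (simp add: pd_phi_def G_def)
next
  case False
  then show ?thesis using assms by (simp add: phi_F F_def G_def)
qed

lemma sumG: assumes "l > 0" shows "G l u + G l v = G l 0 + N l u v / (l*(l+1))"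
proof -
  have "l + 1 > 0" using assms by simp
  then have "0 powr (l+1) = 0" by simp
  then have "G l 0 = l / (l*(l+1))" by (simp add: G_def)
  then have "G l 0 + N l u v / (l*(l+1)) = (l + N l u v) / (l*(l+1))" by (simp add: add_divide_distrib)
  also have "l + N l u v = (u powr (l + 1) - u + l * (1 - u)) + (v powr (l + 1) - v + l * (1 - v))"
    unfolding N_def by (simp add: algebra_simps)
  finally show ?thesis by (simp add: G_def add_divide_distrib)
qed

lemma le_iff_N: assumes "l > 0"
  shows "pd_phi l 0 \<le> pd_phi l u + pd_phi l v \<longleftrightarrow> 0 \<le> N l u v"
proof -
  have lp: "l*(l+1) > 0" using assms by simp
  have "pd_phi l 0 \<le> pd_phi l u + pd_phi l v \<longleftrightarrow> G l 0 \<le> G l u + G l v" using assms by (simp add: phi_G)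
  also have "\<dots> \<longleftrightarrow> 0 \<le> N l u v / (l*(l+1))" using sumG[OF assms, of u v] by simp
  also have "\<dots> \<longleftrightarrow> 0 \<le> N l u v" using lp by (simp add: zero_le_divide_iff)
  finally show ?thesis .
qed

lemma eq_iff_N: assumes "l > 0"
  shows "pd_phi l u + pd_phi l v = pd_phi l 0 \<longleftrightarrow> N l u v = 0"
proof -
  have lp: "l*(l+1) > 0" using assms by simp
  have "pd_phi l u + pd_phi l v = pd_phi l 0 \<longleftrightarrow> G l u + G l v = G l 0" using assms by (simp add: phi_G)
  also have "\<dots> \<longleftrightarrow> N l u v / (l*(l+1)) = 0" using sumG[OF assms, of u v] by simp
  also have "\<dots> \<longleftrightarrow> N l u v = 0" using lp assms by simp
  finally show ?thesis .
qed

lemma pw_bounds: assumes "l > 0" "(u::real) \<in> {0..1}" shows "0 \<le> u powr (l+1)" "u powr (l+1) \<le> u"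
proof -
  show "0 \<le> u powr (l+1)" by simp
  show "u powr (l+1) \<le> u"
  proof (cases "u = 0")
    case True then show ?thesis by simp
  next
    case False then show ?thesis using assms by (intro powr_le_one_le) auto
  qed
qed

lemma part3a: assumes "u1 \<in> {0..1}" "u2 \<in> {0..1}" "u1 + u2 < 1"
  shows "\<forall>\<^sub>F l in at_top. (u1, u2) \<in> pd_zeroset l"
proof -
  have "\<forall>\<^sub>F l in at_top. l \<ge> max 1 (2/(1-(u1+u2)))" by (rule eventually_ge_at_top)
  then show ?thesis
  proof (rule eventually_mono)
    fix l assume l: "l \<ge> max 1 (2/(1-(u1+u2)))"
    then have l0: "l > 0" by simp
    have "2/(1-(u1+u2)) \<le> l" using l by simp
    then have "2 \<le> l * (1-(u1+u2))" using assms by (simp add: divide_le_eq)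
    moreover have "0 \<le> u1 powr (l+1)" "0 \<le> u2 powr (l+1)" by simp_all
    moreover have "N l u1 u2 = u1 powr (l+1) + u2 powr (l+1) + (l*(1-(u1+u2)) - (u1+u2))"
      by (simp add: N_def algebra_simps)
    ultimately have "0 \<le> N l u1 u2" using assms by linarith
    then show "(u1, u2) \<in> pd_zeroset l" unfolding zeroset_eq using le_iff_N[OF l0] assms by auto
  qed
qed

lemma part3b: assumes "u1 \<in> {0..1}" "u2 \<in> {0..1}" "u1 + u2 > 1"
  shows "\<forall>\<^sub>F l in at_top. (u1, u2) \<notin> pd_zeroset l"
proof -
  have "\<forall>\<^sub>F l in at_top. l \<ge> max 1 (3/((u1+u2)-1))" by (rule eventually_ge_at_top)
  then show ?thesis
  proof (rule eventually_mono)
    fix l assume l: "l \<ge> max 1 (3/((u1+u2)-1))"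
    then have l0: "l > 0" by simp
    have "3/((u1+u2)-1) \<le> l" using l by simp
    then have "3 \<le> l * ((u1+u2)-1)" using assms by (simp add: divide_le_eq)
    moreover have "u1 powr (l+1) \<le> u1" "u2 powr (l+1) \<le> u2"
      using pw_bounds(2)[OF l0 assms(1)] pw_bounds(2)[OF l0 assms(2)] by auto
    moreover have "N l u1 u2 = u1 powr (l+1) + u2 powr (l+1) - (u1+u2) - l*((u1+u2)-1)"
      by (simp add: N_def algebra_simps)
    ultimately have "N l u1 u2 < 0" using assms by linarith
    then show "(u1, u2) \<notin> pd_zeroset l" unfolding zeroset_eq using le_iff_N[OF l0] by auto
  qed
qed

lemma curveA: assumes "l > 0" "l \<ge> 3/e" "e > 0" "u1 \<in> {0..1}" "u2 \<in> {0..1}" "N l u1 u2 = 0"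
  shows "\<bar>u1 + u2 - 1\<bar> < e"
proof -
  have p: "u1 powr (l+1) \<le> u1" "u2 powr (l+1) \<le> u2"
    using pw_bounds(2)[OF assms(1) assms(4)] pw_bounds(2)[OF assms(1) assms(5)] by auto
  have q: "0 \<le> u1 powr (l+1)" "0 \<le> u2 powr (l+1)" by simp_all
  have eq: "l * (1 - (u1+u2)) = (u1+u2) - (u1 powr (l+1) + u2 powr (l+1))"
    using assms(6) unfolding N_def by (simp add: algebra_simps)
  have b1: "0 \<le> (u1+u2) - (u1 powr (l+1) + u2 powr (l+1))" using p by linarith
  have b2: "(u1+u2) - (u1 powr (l+1) + u2 powr (l+1)) \<le> 2" using q assms(4,5) by (simp only: atLeastAtMost_iff) linarith
  have "\<bar>l * (1 - (u1+u2))\<bar> \<le> 2" unfolding eq using b1 b2 by linarith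
  then have "l * \<bar>u1 + u2 - 1\<bar> \<le> 2" using assms(1) by (simp add: abs_mult abs_minus_commute)
  moreover have "3 \<le> e * l" using assms(2,3) by (simp add: divide_le_eq mult.commute)
  ultimately have "l * \<bar>u1 + u2 - 1\<bar> < l * e" by (simp add: mult.commute)
  then show ?thesis using assms(1) by simp
qed

lemma curveB: assumes "l > 0" "u1 \<in> {0..1}" shows "\<exists>v. v \<in> {0..1} \<and> N l u1 v = 0"
proof -
  have l1: "l + 1 > 0" using assms by simp
  have cont: "continuous_on {0..1} (N l u1)"
    unfolding N_def using l1
    by (intro continuous_intros continuous_on_powr') auto
  have g1: "N l u1 1 \<le> 0"
  proof -
    have "u1 powr (l+1) \<le> u1" using pw_bounds(2)[OF assms] .
    moreover have "0 \<le> l * u1" using assms by simp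
    moreover have "N l u1 1 = u1 powr (l+1) - u1 - l * u1" by (simp add: N_def algebra_simps)
    ultimately show ?thesis by linarith
  qed
  have g0: "0 \<le> N l u1 0"
  proof (cases "u1 = 0")
    case True
    then show ?thesis using assms l1 by (simp add: N_def)
  next
    case False
    have "N l u1 0 = u1 powr (l + 1) - u1 + l * (1 - u1)" using l1 by (simp add: N_def)
    also have "\<dots> = (l * (l+1)) * F l u1" using assms l1 by (simp add: F_gen)
    also have "\<dots> \<ge> 0" using F_nonneg[of u1 l] False assms l1 by simp
    finally show ?thesis .
  qed
  obtain v where "0 \<le> v" "v \<le> 1" "N l u1 v = 0" using IVT2'[of "N l u1" 1 0 0, OF g1 g0 _ cont] by auto
  then show ?thesis by auto
qed

lemma part3c: assumes "e > 0"
  shows "\<forall>\<^sub>F l in at_top.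
            (\<forall>(u1, u2) \<in> pd_curve l. \<bar>u1 + u2 - 1\<bar> < e) \<and>
            (\<forall>u1\<in>{0..1::real}. \<exists>(v1, v2) \<in> pd_curve l. dist (v1, v2) (u1, 1 - u1) < e)"
proof -
  have "\<forall>\<^sub>F l in at_top. l \<ge> max 1 (3/e)" by (rule eventually_ge_at_top)
  then show ?thesis
  proof (rule eventually_mono)
    fix l assume l: "l \<ge> max 1 (3/e)"
    then have l0: "l > 0" and le: "l \<ge> 3/e" by auto
    have A: "\<bar>u1 + u2 - 1\<bar> < e" if "(u1, u2) \<in> pd_curve l" for u1 u2
    proof -
      have h: "u1 \<in> {0..1}" "u2 \<in> {0..1}" "pd_phi l u1 + pd_phi l u2 = pd_phi l 0"
        using that unfolding pd_curve_def by auto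
      then show ?thesis using curveA[OF l0 le assms h(1,2)] eq_iff_N[OF l0] by auto
    qed
    show "(\<forall>(u1, u2) \<in> pd_curve l. \<bar>u1 + u2 - 1\<bar> < e) \<and>
            (\<forall>u1\<in>{0..1::real}. \<exists>(v1, v2) \<in> pd_curve l. dist (v1, v2) (u1, 1 - u1) < e)"
    proof (intro conjI ballI)
      fix p assume "p \<in> pd_curve l"
      then show "case p of (u1, u2) \<Rightarrow> \<bar>u1 + u2 - 1\<bar> < e" using A by (cases p) auto
    next
      fix u1 :: real assume u1: "u1 \<in> {0..1}"
      obtain v where v: "v \<in> {0..1}" "N l u1 v = 0" using curveB[OF l0 u1] by auto
      have c: "(u1, v) \<in> pd_curve l" using v u1 eq_iff_N[OF l0] unfolding pd_curve_def by auto
      have "dist (u1, v) (u1, 1 - u1) = \<bar>u1 + v - 1\<bar>"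
        by (simp add: dist_Pair_Pair dist_real_def)
      then have "dist (u1, v) (u1, 1 - u1) < e" using A[OF c] by simp
      then show "\<exists>(v1, v2) \<in> pd_curve l. dist (v1, v2) (u1, 1 - u1) < e" using c by auto
    qed
  qed
qed


theorem theorem1:
  shows "(\<forall>l::real. l \<le> -1 \<longrightarrow>
            pd_zeroset l = {(u1, 0) | u1. u1 \<in> {0..1}} \<union> {(0, u2) | u2. u2 \<in> {0..1}})
       \<and> (\<forall>l::real. l > -1 \<longrightarrow> emeasure lborel (pd_zeroset l) > 0)
       \<and> (\<forall>u1 u2::real. u1 \<in> {0..1} \<and> u2 \<in> {0..1} \<and> u1 + u2 < 1 \<longrightarrow>
            (\<forall>\<^sub>F l in at_top. (u1, u2) \<in> pd_zeroset l))
       \<and> (\<forall>u1 u2::real. u1 \<in> {0..1} \<and> u2 \<in> {0..1} \<and> u1 + u2 > 1 \<longrightarrow>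
            (\<forall>\<^sub>F l in at_top. (u1, u2) \<notin> pd_zeroset l))
       \<and> (\<forall>e>0::real. \<forall>\<^sub>F l in at_top.
            (\<forall>(u1, u2) \<in> pd_curve l. \<bar>u1 + u2 - 1\<bar> < e) \<and>
            (\<forall>u1\<in>{0..1::real}. \<exists>(v1, v2) \<in> pd_curve l. dist (v1, v2) (u1, 1 - u1) < e))"
    using part1 part2 part3a part3b part3c by blast

end
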